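(* Let $H_0, H_1^{(1)},\dots,H_1^{(m)}$ be Hermitian $d\times d$ matrices, $H(v)=H_0+\sum_{k=1}^m v_kH_1^{(k)}$, $E_0(v)$ its smallest eigenvalue, and $\mathcal{F}[\rho]=\sup_{v\in\mathbb{R}^m}\{E_0(v)-\sum_k v_k\rho_k\}$. Assume $E_0$ is strictly concave on $\mathbb{R}^m$ and that the smallest eigenvalue of $H(v)$ is non-degenerate for every $v\in\mathbb{R}^m$. Let $D$ be the interior of $\{\rho:\mathcal{F}[\rho]<\infty\}$ and, for $\rho\in D$, let $f(\rho)$ be the unique $v$ attaining the supremum in $\mathcal{F}[\rho]$. Then the map $D\ni\rho\mapsto P_0(\rho)$, where $P_0(\rho)$ is the orthogonal projector onto the ground-state eigenspace of $H(f(\rho))$, is continuous; i.e. the ground-state wave function depends continuously (up to phase) on the generalized density.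
   Context: This is the finite-dimensional setting in which $\rho_k=\langle\Psi_0|H_1^{(k)}|\Psi_0\rangle$ is the generalized density (e.g. a one-particle reduced density matrix) associated with the ground state $\Psi_0$ of $H(v)$. *)

theory Defs
  imports "HOL-Analysis.Analysis"
begin

text \<open>Complex d x d matrices are represented as complex^'d^'d (d = CARD('d)).\<close>

definition hermitian :: "complex^'d^'d \<Rightarrow> bool" where
  "hermitian A \<longleftrightarrow> (\<forall>i j. A $ i $ j = cnj (A $ j $ i))"

definition is_eigenvalue :: "complex^'d^'d \<Rightarrow> complex \<Rightarrow> bool" where
  "is_eigenvalue A ev \<longleftrightarrow> (\<exists>x. x \<noteq> 0 \<and> A *v x = ev *s x)"

definition eigenspace :: "complex^'d^'d \<Rightarrow> complex \<Rightarrow> (complex^'d) set" where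
  "eigenspace A ev = {x. A *v x = ev *s x}"

text \<open>Smallest eigenvalue of a (Hermitian) matrix: all its eigenvalues are real.\<close>
definition smallest_eigenvalue :: "complex^'d^'d \<Rightarrow> real" where
  "smallest_eigenvalue A = Min {e::real. is_eigenvalue A (complex_of_real e)}"

definition nondegenerate_eigenvalue :: "complex^'d^'d \<Rightarrow> complex \<Rightarrow> bool" where
  "nondegenerate_eigenvalue A ev \<longleftrightarrow>
     (\<exists>x. x \<noteq> 0 \<and> eigenspace A ev = range (\<lambda>c. c *s x))"

definition is_orth_projector_onto :: "complex^'d^'d \<Rightarrow> (complex^'d) set \<Rightarrow> bool" where
  "is_orth_projector_onto P S \<longleftrightarrow> P ** P = P \<and> hermitian P \<and> range (\<lambda>x. P *v x) = S"

definition orth_projector :: "(complex^'d) set \<Rightarrow> complex^'d^'d" where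
  "orth_projector S = (THE P. is_orth_projector_onto P S)"

definition Ham :: "complex^'d^'d \<Rightarrow> ('m \<Rightarrow> complex^'d^'d) \<Rightarrow> real^'m \<Rightarrow> complex^'d^'d" where
  "Ham H0 H1 v = H0 + (\<Sum>k\<in>UNIV. v $ k *\<^sub>R H1 k)"

definition E0 :: "complex^'d^'d \<Rightarrow> ('m::finite \<Rightarrow> complex^'d^'d) \<Rightarrow> real^'m \<Rightarrow> real" where
  "E0 H0 H1 v = smallest_eigenvalue (Ham H0 H1 v)"

definition Ffun :: "complex^'d^'d \<Rightarrow> ('m::finite \<Rightarrow> complex^'d^'d) \<Rightarrow> real^'m \<Rightarrow> ereal" where
  "Ffun H0 H1 \<rho> = (SUP v\<in>UNIV. ereal (E0 H0 H1 v - v \<bullet> \<rho>))"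

definition Fdom :: "complex^'d^'d \<Rightarrow> ('m::finite \<Rightarrow> complex^'d^'d) \<Rightarrow> (real^'m) set" where
  "Fdom H0 H1 = interior {\<rho>. Ffun H0 H1 \<rho> < \<infinity>}"

definition fpot :: "complex^'d^'d \<Rightarrow> ('m::finite \<Rightarrow> complex^'d^'d) \<Rightarrow> real^'m \<Rightarrow> real^'m" where
  "fpot H0 H1 \<rho> = (THE v. \<forall>w. E0 H0 H1 w - w \<bullet> \<rho> \<le> E0 H0 H1 v - v \<bullet> \<rho>)"

definition strictly_concave_on :: "'a::real_vector set \<Rightarrow> ('a \<Rightarrow> real) \<Rightarrow> bool" where
  "strictly_concave_on S f \<longleftrightarrow> convex S \<and>
     (\<forall>x\<in>S. \<forall>y\<in>S. x \<noteq> y \<longrightarrow> (\<forall>u. 0 < u \<and> u < 1 \<longrightarrow>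
        f ((1 - u) *\<^sub>R x + u *\<^sub>R y) > (1 - u) * f x + u * f y))"

definition P0 :: "complex^'d^'d \<Rightarrow> ('m::finite \<Rightarrow> complex^'d^'d) \<Rightarrow> real^'m \<Rightarrow> complex^'d^'d" where
  "P0 H0 H1 \<rho> = orth_projector (eigenspace (Ham H0 H1 (fpot H0 H1 \<rho>))
                   (complex_of_real (E0 H0 H1 (fpot H0 H1 \<rho>))))"

end

theory Submission
  imports Defs
begin

definition adj :: "complex^'d^'d \<Rightarrow> complex^'d^'d" where
  "adj A = (\<chi> i j. cnj (A $ j $ i))"

lemma hermitian_adj: "hermitian A \<longleftrightarrow> adj A = A"
  unfolding hermitian_def adj_def vec_eq_iff by (simp only: vec_lambda_beta) metis

lemma adj_mult: "adj (A ** B) = adj B ** adj A"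
  unfolding adj_def matrix_matrix_mult_def vec_eq_iff
  by (simp add: mult.commute)

lemma orth_proj_unique:
  fixes P Q :: "complex^'d^'d"
  assumes P: "is_orth_projector_onto P S" and Q: "is_orth_projector_onto Q S"
  shows "P = Q"
proof -
  have fix1: "A ** B = B" if A: "is_orth_projector_onto A S" and B: "is_orth_projector_onto B S" for A B :: "complex^'d^'d"
  proof -
    have "(A ** B) *v y = B *v y" for y
    proof -
      have "B *v y \<in> S" using B unfolding is_orth_projector_onto_def by auto
      then obtain z where z: "B *v y = A *v z" using A unfolding is_orth_projector_onto_def by auto
      have "(A ** B) *v y = A *v (A *v z)" by (simp add: matrix_vector_mul_assoc[symmetric] z)
      also have "\<dots> = (A ** A) *v z" by (simp add: matrix_vector_mul_assoc)
      also have "\<dots> = B *v y" using A z unfolding is_orth_projector_onto_def by simp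
      finally show ?thesis .
    qed
    then show ?thesis using matrix_eq by blast
  qed
  have e1: "Q ** P = P" using fix1[OF Q P] .
  have hP: "adj P = P" and hQ: "adj Q = Q" using P Q unfolding is_orth_projector_onto_def hermitian_adj by auto
  have "P = adj P" using hP by (rule sym)
  also have "\<dots> = adj (Q ** P)" using e1 by (rule arg_cong[OF sym])
  also have "\<dots> = adj P ** adj Q" by (rule adj_mult)
  also have "\<dots> = P ** Q" unfolding hP hQ ..
  also have "\<dots> = Q" using fix1[OF P Q] .
  finally show ?thesis .
qed

lemma orth_projector_eq: "is_orth_projector_onto P S \<Longrightarrow> orth_projector S = P"
  unfolding orth_projector_def
proof (rule the_equality)
  fix Q assume "is_orth_projector_onto P S" "is_orth_projector_onto Q S"
  then show "Q = P" by (rule orth_proj_unique[rotated])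
qed

definition nsq :: "complex^'d \<Rightarrow> complex" where
  "nsq x = (\<Sum>k\<in>UNIV. x$k * cnj (x$k))"

definition rk1 :: "complex^'d \<Rightarrow> complex^'d^'d" where
  "rk1 x = (\<chi> i j. x$i * cnj (x$j) / nsq x)"

definition nsr :: "complex^'d \<Rightarrow> real" where
  "nsr x = (\<Sum>k\<in>UNIV. (cmod (x$k))^2)"

lemma nsq_real: "nsq x = complex_of_real (nsr x)"
  unfolding nsq_def nsr_def of_real_sum complex_norm_square ..

lemma nsq_nz: assumes "x \<noteq> 0" shows "nsq x \<noteq> 0"
proof -
  obtain i where "x$i \<noteq> 0" using assms by (auto simp: vec_eq_iff)
  then have "0 < (cmod (x$i))^2" by simp
  also have "\<dots> \<le> nsr x" unfolding nsr_def
    by (rule member_le_sum) auto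
  finally show ?thesis unfolding nsq_real of_real_eq_0_iff by simp
qed

lemma cnj_nsq: "cnj (nsq x) = nsq x"
  unfolding nsq_real by simp

lemma rk1_mult_vec: "rk1 x *v y = ((\<Sum>j\<in>UNIV. cnj (x$j) * y$j) / nsq x) *s x"
  unfolding rk1_def matrix_vector_mult_def vec_eq_iff
  by (auto simp: sum_distrib_right sum_divide_distrib intro!: sum.cong)

lemma rk1_scal: assumes "x \<noteq> 0" shows "rk1 x *v (c *s x) = c *s x"
proof -
  have "(\<Sum>j\<in>UNIV. cnj (x$j) * (c *s x)$j) = c * nsq x"
    unfolding nsq_def by (auto simp: sum_distrib_left intro!: sum.cong)
  then have "(\<Sum>j\<in>UNIV. cnj (x$j) * (c *s x)$j) / nsq x = c" using nsq_nz[OF assms] by simp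
  then show ?thesis by (simp only: rk1_mult_vec)
qed

lemma rk1_range: assumes "x \<noteq> 0" shows "range (\<lambda>y. rk1 x *v y) = range (\<lambda>c. c *s x)"
proof
  show "range (\<lambda>y. rk1 x *v y) \<subseteq> range (\<lambda>c. c *s x)"
    by (auto simp: rk1_mult_vec)
  show "range (\<lambda>c. c *s x) \<subseteq> range (\<lambda>y. rk1 x *v y)"
    using rk1_scal[OF assms] by (metis (no_types, lifting) image_subset_iff rangeI)
qed

lemma rk1_idem: assumes "x \<noteq> 0" shows "rk1 x ** rk1 x = rk1 x"
proof -
  have "(rk1 x ** rk1 x) *v y = rk1 x *v y" for y
  proof -
    have "(rk1 x ** rk1 x) *v y = rk1 x *v (rk1 x *v y)" by (simp add: matrix_vector_mul_assoc)
    also have "\<dots> = rk1 x *v y" unfolding rk1_mult_vec[of x y] by (rule rk1_scal[OF assms])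
    finally show ?thesis .
  qed
  then show ?thesis using matrix_eq by blast
qed

lemma rk1_herm: "hermitian (rk1 x)"
  unfolding hermitian_def rk1_def by (simp add: cnj_nsq mult.commute)

lemma rk1_trace: assumes "x \<noteq> 0" shows "trace (rk1 x) = 1"
  unfolding trace_def rk1_def using nsq_nz[OF assms]
  by (simp add: sum_divide_distrib[symmetric] nsq_def)

lemma rk1_bound: "cmod (rk1 x $ i $ j) \<le> 1"
proof (cases "x = 0")
  case True then show ?thesis by (simp add: rk1_def)
next
  case False
  let ?S = "nsr x"
  have S0: "0 \<le> ?S" unfolding nsr_def by (simp add: sum_nonneg)
  have S: "0 < ?S" using nsq_nz[OF False] S0 unfolding nsq_real by auto
  have a: "(cmod (x$i))^2 \<le> ?S" "(cmod (x$j))^2 \<le> ?S" unfolding nsr_def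
    by (rule member_le_sum, auto)+
  have "cmod (x$i) * cmod (x$j) \<le> ?S"
  proof (cases "cmod (x$i) \<le> cmod (x$j)")
    case True
    then have "cmod (x$i) * cmod (x$j) \<le> cmod (x$j) * cmod (x$j)" by (simp add: mult_right_mono)
    then show ?thesis using a by (simp add: power2_eq_square)
  next
    case False
    then have "cmod (x$i) * cmod (x$j) \<le> cmod (x$i) * cmod (x$i)" by (simp add: mult_left_mono)
    then show ?thesis using a by (simp add: power2_eq_square)
  qed
  moreover have "cmod (rk1 x $ i $ j) = cmod (x$i) * cmod (x$j) / ?S"
    unfolding rk1_def nsq_real using S0 by (simp add: norm_mult norm_divide)
  ultimately show ?thesis using S by (simp add: divide_le_eq)
qed

lemma vec_scal: "(P::complex^'d^'d) *v (c *s y) = c *s (P *v y)"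
  unfolding matrix_vector_mult_def vec_eq_iff by (simp add: sum_distrib_left mult.left_commute)

lemma proj_char:
  fixes P A :: "complex^'d^'d"
  assumes x: "x \<noteq> 0" and es: "eigenspace A e = range (\<lambda>c. c *s x)"
    and idem: "P ** P = P" and h: "hermitian P" and ev: "\<forall>y. A *v (P *v y) = e *s (P *v y)"
    and tr: "trace P = 1"
  shows "P = rk1 x"
proof -
  have sub: "P *v y \<in> range (\<lambda>c. c *s x)" for y
    using ev es unfolding eigenspace_def by blast
  have "P \<noteq> 0" using tr by (auto simp: trace_def)
  then obtain y where "P *v y \<noteq> 0" using matrix_eq[of P 0] by auto
  moreover obtain c where c: "P *v y = c *s x" using sub by blast
  ultimately have c0: "c \<noteq> 0" by auto
  have "range (\<lambda>y. P *v y) = range (\<lambda>c. c *s x)"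
  proof
    show "range (\<lambda>y. P *v y) \<subseteq> range (\<lambda>c. c *s x)" using sub by blast
    show "range (\<lambda>c. c *s x) \<subseteq> range (\<lambda>y. P *v y)"
    proof clarify
      fix d
      have "P *v ((d / c) *s y) = d *s x" using c c0 by (simp add: vec_scal)
      then show "d *s x \<in> range (\<lambda>y. P *v y)" by (metis rangeI)
    qed
  qed
  then have "is_orth_projector_onto P (range (\<lambda>c. c *s x))"
    using idem h unfolding is_orth_projector_onto_def by simp
  moreover have "is_orth_projector_onto (rk1 x) (range (\<lambda>c. c *s x))"
    unfolding is_orth_projector_onto_def using rk1_idem[OF x] rk1_herm rk1_range[OF x] by simp
  ultimately show ?thesis by (rule orth_proj_unique)
qed

lemma rk1_props:
  fixes A :: "complex^'d^'d"
  assumes x: "x \<noteq> 0" and es: "eigenspace A e = range (\<lambda>c. c *s x)"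
  shows "orth_projector (eigenspace A e) = rk1 x"
    and "\<forall>y. A *v (rk1 x *v y) = e *s (rk1 x *v y)"
proof -
  show "orth_projector (eigenspace A e) = rk1 x"
    unfolding es is_orth_projector_onto_def
    by (rule orth_projector_eq) (simp add: is_orth_projector_onto_def rk1_idem[OF x] rk1_herm rk1_range[OF x])
  show "\<forall>y. A *v (rk1 x *v y) = e *s (rk1 x *v y)"
    using rk1_range[OF x] es unfolding eigenspace_def by blast
qed

lemma sc_cont:
  fixes f :: "'a::euclidean_space \<Rightarrow> real"
  assumes "strictly_concave_on UNIV f"
  shows "continuous_on UNIV f"
proof -
  have "convex_on UNIV (\<lambda>x. - f x)"
    unfolding convex_on_def
  proof (intro conjI ballI allI impI)
    fix x y :: 'a and u v :: real
    assume uv: "0 \<le> u" "0 \<le> v" "u + v = 1"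
    show "- f (u *\<^sub>R x + v *\<^sub>R y) \<le> u * - f x + v * - f y"
    proof (cases "x = y \<or> v = 0 \<or> v = 1")
      case True
      then show ?thesis
      proof (elim disjE)
        assume "x = y"
        moreover have "u * f y + v * f y = f y" using uv by (metis distrib_right mult_1)
        ultimately show ?thesis using uv by (simp add: scaleR_left_distrib[symmetric])
      next
        assume "v = 0" then show ?thesis using uv by simp
      next
        assume "v = 1" then show ?thesis using uv by simp
      qed
    next
      case False
      then have "0 < v" "v < 1" "x \<noteq> y" using uv by auto
      then have "f ((1 - v) *\<^sub>R x + v *\<^sub>R y) > (1 - v) * f x + v * f y"
        using assms unfolding strictly_concave_on_def by blast
      moreover have "u = 1 - v" using uv by simp
      ultimately show ?thesis by simp
    qed
  qed simp
  then have "continuous_on UNIV (\<lambda>x. - f x)" by (rule convex_on_continuous[OF open_UNIV])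
  then have "continuous_on UNIV (\<lambda>x. - (- f x))" by (rule continuous_on_minus)
  then show ?thesis by simp
qed

lemma Ham_cont: "continuous_on UNIV (Ham H0 H1)"
  unfolding Ham_def by (intro continuous_intros)

definition Kset :: "(complex^'d^'d) set" where
  "Kset = {P. \<forall>i j. cmod (P$i$j) \<le> 1}"

lemma compact_Kset: "compact Kset"
proof -
  have "closed Kset" unfolding Kset_def Collect_all_eq
    by (intro closed_INT ballI closed_Collect_le continuous_intros)
  moreover have "bounded Kset"
  proof -
    have "norm P \<le> real (CARD('d)) * real (CARD('d))" if "P \<in> Kset" for P :: "complex^'d^'d"
    proof -
      have rowb: "norm (P$i) \<le> real (CARD('d))" for i
      proof -
        have "norm (P$i) \<le> (\<Sum>j\<in>UNIV. norm (P$i$j))" unfolding norm_vec_def by (rule L2_set_le_sum) simp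
        also have "\<dots> \<le> (\<Sum>j\<in>(UNIV::'d set). 1)" using that unfolding Kset_def by (intro sum_mono) auto
        finally show ?thesis by simp
      qed
      have "norm P \<le> (\<Sum>i\<in>UNIV. norm (P$i))" unfolding norm_vec_def by (rule L2_set_le_sum) simp
      also have "\<dots> \<le> (\<Sum>i\<in>(UNIV::'d set). real (CARD('d)))" by (intro sum_mono rowb)
      finally show ?thesis by simp
    qed
    then show ?thesis unfolding bounded_iff by blast
  qed
  ultimately show ?thesis using compact_eq_bounded_closed by blast
qed

lemma Pv_cont:
  fixes A :: "'a::euclidean_space \<Rightarrow> complex^'d^'d" and e :: "'a \<Rightarrow> real"
  assumes contA: "continuous_on UNIV A" and contE: "continuous_on UNIV e"
    and nd: "\<And>v. nondegenerate_eigenvalue (A v) (complex_of_real (e v))"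
  shows "continuous_on UNIV (\<lambda>v. orth_projector (eigenspace (A v) (complex_of_real (e v))))"
    (is "continuous_on UNIV ?f")
proof -
  have ex: "\<exists>x. x \<noteq> 0 \<and> eigenspace (A v) (complex_of_real (e v)) = range (\<lambda>c. c *s x)" for v
    using nd[of v] unfolding nondegenerate_eigenvalue_def .
  define C where "C = {z :: 'a \<times> (complex^'d^'d). snd z ** snd z = snd z \<and> hermitian (snd z)
      \<and> (\<forall>y. A (fst z) *v (snd z *v y) = complex_of_real (e (fst z)) *s (snd z *v y)) \<and> trace (snd z) = 1}"
  have cA: "continuous_on UNIV (\<lambda>z::'a \<times> (complex^'d^'d). A (fst z))"
    by (rule continuous_on_compose2[OF contA continuous_on_fst]) auto
  have cE: "continuous_on UNIV (\<lambda>z::'a \<times> (complex^'d^'d). e (fst z))"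
    by (rule continuous_on_compose2[OF contE continuous_on_fst]) auto
  have c1: "closed {z :: 'a \<times> (complex^'d^'d). snd z ** snd z = snd z}"
    unfolding matrix_matrix_mult_def
    by (intro closed_Collect_eq continuous_intros)
  have c2: "closed {z :: 'a \<times> (complex^'d^'d). hermitian (snd z)}"
    unfolding hermitian_def Collect_all_eq
    by (intro closed_INT ballI closed_Collect_eq continuous_intros)
  have c3: "closed {z :: 'a \<times> (complex^'d^'d). \<forall>y. A (fst z) *v (snd z *v y) = complex_of_real (e (fst z)) *s (snd z *v y)}"
    unfolding Collect_all_eq matrix_vector_mult_def vector_scalar_mult_def
    by (intro closed_INT ballI closed_Collect_eq continuous_intros cA cE)
  have c4: "closed {z :: 'a \<times> (complex^'d^'d). trace (snd z) = 1}"
    unfolding trace_def by (intro closed_Collect_eq continuous_intros)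
  have "C = {z. snd z ** snd z = snd z} \<inter> {z. hermitian (snd z)} \<inter>
     {z. \<forall>y. A (fst z) *v (snd z *v y) = complex_of_real (e (fst z)) *s (snd z *v y)} \<inter> {z. trace (snd z) = 1}"
    unfolding C_def by blast
  then have cC: "closed C" using c1 c2 c3 c4 by (simp add: closed_Int)
  have fK: "?f \<in> UNIV \<rightarrow> Kset"
  proof
    fix v :: 'a
    obtain x where x: "x \<noteq> 0" "eigenspace (A v) (complex_of_real (e v)) = range (\<lambda>c. c *s x)" using ex by blast
    show "?f v \<in> Kset" unfolding rk1_props(1)[OF x] Kset_def using rk1_bound by blast
  qed
  have graph: "(\<lambda>v. (v, ?f v)) ` UNIV = (UNIV \<times> Kset) \<inter> C"
  proof
    show "(\<lambda>v. (v, ?f v)) ` UNIV \<subseteq> (UNIV \<times> Kset) \<inter> C"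
    proof clarify
      fix v :: 'a
      obtain x where x: "x \<noteq> 0" "eigenspace (A v) (complex_of_real (e v)) = range (\<lambda>c. c *s x)" using ex by blast
      show "(v, ?f v) \<in> (UNIV \<times> Kset) \<inter> C"
        using rk1_props[OF x] rk1_idem[OF x(1)] rk1_herm[of x] rk1_trace[OF x(1)] rk1_bound[of x]
        unfolding C_def Kset_def by auto
    qed
    show "(UNIV \<times> Kset) \<inter> C \<subseteq> (\<lambda>v. (v, ?f v)) ` UNIV"
    proof clarify
      fix v :: 'a and P :: "complex^'d^'d"
      assume "(v, P) \<in> C"
      then have P: "P ** P = P" "hermitian P" "\<forall>y. A v *v (P *v y) = complex_of_real (e v) *s (P *v y)" "trace P = 1"
        unfolding C_def by auto
      obtain x where x: "x \<noteq> 0" "eigenspace (A v) (complex_of_real (e v)) = range (\<lambda>c. c *s x)" using ex by blast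
      have "P = ?f v" using proj_char[OF x P] rk1_props(1)[OF x] by simp
      then show "(v, P) \<in> range (\<lambda>v. (v, ?f v))" by blast
    qed
  qed
  have "closedin (top_of_set (UNIV \<times> Kset)) ((\<lambda>v. (v, ?f v)) ` UNIV)"
    unfolding graph by (rule closedin_closed_Int[OF cC])
  then show ?thesis using continuous_closed_graph_eq[OF compact_Kset fK] by simp
qed

lemma sup_bound:
  fixes E :: "real^'m \<Rightarrow> real"
  assumes "(SUP v\<in>UNIV. ereal (E v - v \<bullet> \<rho>)) < \<infinity>"
  shows "\<exists>B. \<forall>v. E v - v \<bullet> \<rho> \<le> B"
proof -
  let ?S = "(SUP v\<in>UNIV. ereal (E v - v \<bullet> \<rho>))"
  obtain B where B: "?S \<le> ereal B"
    using assms by (cases ?S) auto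
  have "ereal (E v - v \<bullet> \<rho>) \<le> ereal B" for v
    using B by (meson SUP_upper UNIV_I order_trans)
  then show ?thesis by auto
qed

lemma max_unique:
  fixes E :: "real^'m \<Rightarrow> real"
  assumes sc: "strictly_concave_on UNIV E"
    and v1: "\<forall>w. E w - w \<bullet> \<rho> \<le> E v1 - v1 \<bullet> \<rho>"
    and v2: "\<forall>w. E w - w \<bullet> \<rho> \<le> E v2 - v2 \<bullet> \<rho>"
  shows "v1 = v2"
proof (rule ccontr)
  assume ne: "v1 \<noteq> v2"
  let ?m = "(1 - 1/2) *\<^sub>R v1 + (1/2) *\<^sub>R v2"
  have H: "\<And>x y u. x \<noteq> y \<Longrightarrow> 0 < u \<Longrightarrow> u < 1 \<Longrightarrow> E ((1 - u) *\<^sub>R x + u *\<^sub>R y) > (1 - u) * E x + u * E y"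
    using sc unfolding strictly_concave_on_def by blast
  have "E ?m > (1 - 1/2) * E v1 + (1/2) * E v2"
    by (rule H[OF ne]) auto
  moreover have "?m \<bullet> \<rho> = (1 - 1/2) * (v1 \<bullet> \<rho>) + (1/2) * (v2 \<bullet> \<rho>)"
    by (simp add: inner_add_left)
  moreover have "E ?m - ?m \<bullet> \<rho> \<le> E v1 - v1 \<bullet> \<rho>" using v1 by blast
  moreover have "E v2 - v2 \<bullet> \<rho> \<le> E v1 - v1 \<bullet> \<rho>" using v1 by blast
  moreover have "E v1 - v1 \<bullet> \<rho> \<le> E v2 - v2 \<bullet> \<rho>" using v2 by blast
  moreover have e: "(1::real) - 1/2 = 1/2" by simp
  ultimately show False by (simp only: e)
qed

lemma max_index:
  fixes v :: "real^'m"
  obtains i where "\<And>j. \<bar>v$j\<bar> \<le> \<bar>v$i\<bar>"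
proof -
  let ?A = "range (\<lambda>j. \<bar>v$j\<bar>)"
  have "Max ?A \<in> ?A" by (rule Max_in) auto
  then obtain i where i: "Max ?A = \<bar>v$i\<bar>" by (metis rangeE)
  have "\<bar>v$j\<bar> \<le> \<bar>v$i\<bar>" for j unfolding i[symmetric] by (rule Max_ge) auto
  then show ?thesis using that by blast
qed

lemma coercive_bound:
  fixes E :: "real^'m \<Rightarrow> real"
  assumes \<rho>0: "\<rho>0 \<in> interior {\<rho>. (SUP v\<in>UNIV. ereal (E v - v \<bullet> \<rho>)) < \<infinity>}"
  obtains M \<delta> where "\<delta> > 0" "\<And>v \<rho>. E v - v \<bullet> \<rho> \<le> M + norm v * norm (\<rho> - \<rho>0) - \<delta> * norm v"
proof -
  let ?D = "{\<rho>. (SUP v\<in>UNIV. ereal (E v - v \<bullet> \<rho>)) < \<infinity>}"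
  obtain \<epsilon> where \<epsilon>: "\<epsilon> > 0" "ball \<rho>0 \<epsilon> \<subseteq> ?D" using \<rho>0 mem_interior by blast
  define d where "d = \<epsilon> / 2"
  have d: "d > 0" "d < \<epsilon>" using \<epsilon> unfolding d_def by auto
  have inD: "\<rho>0 + (s * d) *\<^sub>R axis i 1 \<in> ?D" if "\<bar>s\<bar> = 1" for s i
  proof -
    have "dist \<rho>0 (\<rho>0 + (s * d) *\<^sub>R axis i 1) = d" using that d by (simp add: dist_norm abs_mult)
    then have "\<rho>0 + (s * d) *\<^sub>R axis i 1 \<in> ball \<rho>0 \<epsilon>" using d by simp
    then show ?thesis using \<epsilon>(2) by blast
  qed
  have "\<forall>i. \<exists>B. \<forall>v. E v - v \<bullet> (\<rho>0 + (1 * d) *\<^sub>R axis i 1) \<le> B"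
    using inD[of 1] sup_bound by auto
  then obtain Bp where Bp: "\<And>i v. E v - v \<bullet> (\<rho>0 + (1 * d) *\<^sub>R axis i 1) \<le> Bp i" by metis
  have "\<forall>i. \<exists>B. \<forall>v. E v - v \<bullet> (\<rho>0 + (-1 * d) *\<^sub>R axis i 1) \<le> B"
    using inD[of "-1"] sup_bound by auto
  then obtain Bm where Bm: "\<And>i v. E v - v \<bullet> (\<rho>0 + (-1 * d) *\<^sub>R axis i 1) \<le> Bm i" by metis
  define M where "M = (\<Sum>i\<in>UNIV. \<bar>Bp i\<bar> + \<bar>Bm i\<bar>)"
  have BpM: "Bp i \<le> M" and BmM: "Bm i \<le> M" for i
  proof -
    have "\<bar>Bp i\<bar> + \<bar>Bm i\<bar> \<le> M" unfolding M_def by (rule member_le_sum) auto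
    then show "Bp i \<le> M" "Bm i \<le> M" by auto
  qed
  define C where "C = real CARD('m)"
  have C: "C \<ge> 1" unfolding C_def by simp
  have key: "E v - v \<bullet> \<rho> \<le> M + norm v * norm (\<rho> - \<rho>0) - (d / C) * norm v" for v \<rho>
  proof -
    obtain i where i: "\<And>j. \<bar>v$j\<bar> \<le> \<bar>v$i\<bar>" using max_index by blast
    have "norm v \<le> (\<Sum>j\<in>UNIV. \<bar>v$j\<bar>)" by (rule norm_le_l1_cart)
    also have "\<dots> \<le> (\<Sum>j\<in>(UNIV::'m set). \<bar>v$i\<bar>)" by (intro sum_mono i)
    also have "\<dots> = C * \<bar>v$i\<bar>" unfolding C_def by simp
    finally have nv: "(d / C) * norm v \<le> d * \<bar>v$i\<bar>" using C d
      by (simp add: divide_le_eq mult.commute mult.left_commute mult_left_mono)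
    have base: "E v - v \<bullet> \<rho>0 \<le> M - d * \<bar>v$i\<bar>"
    proof (cases "v$i \<ge> 0")
      case True
      have "E v - v \<bullet> (\<rho>0 + (-1 * d) *\<^sub>R axis i 1) \<le> M" using Bm[of v i] BmM[of i] by linarith
      then show ?thesis using True by (simp add: inner_add_right inner_diff_right inner_axis)
    next
      case False
      have "E v - v \<bullet> (\<rho>0 + (1 * d) *\<^sub>R axis i 1) \<le> M" using Bp[of v i] BpM[of i] by linarith
      then show ?thesis using False by (simp add: inner_add_right inner_diff_right inner_axis)
    qed
    have "v \<bullet> (\<rho>0 - \<rho>) \<le> norm v * norm (\<rho> - \<rho>0)"
      using norm_cauchy_schwarz[of v "\<rho>0 - \<rho>"] by (simp add: norm_minus_commute)
    moreover have "E v - v \<bullet> \<rho> = (E v - v \<bullet> \<rho>0) + v \<bullet> (\<rho>0 - \<rho>)" by (simp add: inner_diff_right)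
    ultimately show ?thesis using base nv by linarith
  qed
  show ?thesis
    by (rule that[of "d / C"]) (use d C key in auto)
qed

lemma fpot_cont:
  fixes E :: "real^'m \<Rightarrow> real"
  assumes sc: "strictly_concave_on UNIV E"
  shows "continuous_on (interior {\<rho>. (SUP v\<in>UNIV. ereal (E v - v \<bullet> \<rho>)) < \<infinity>})
           (\<lambda>\<rho>. THE v. \<forall>w. E w - w \<bullet> \<rho> \<le> E v - v \<bullet> \<rho>)"
proof -
  let ?D = "interior {\<rho>. (SUP v\<in>UNIV. ereal (E v - v \<bullet> \<rho>)) < \<infinity>}"
  let ?fp = "\<lambda>\<rho>. THE v. \<forall>w. E w - w \<bullet> \<rho> \<le> E v - v \<bullet> \<rho>"
  have cE: "continuous_on UNIV E" by (rule sc_cont[OF sc])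
  have fpeq: "?fp \<rho> = v" if "\<forall>w. E w - w \<bullet> \<rho> \<le> E v - v \<bullet> \<rho>" for \<rho> v
    by (rule the_equality[where P="\<lambda>v. \<forall>w. E w - w \<bullet> \<rho> \<le> E v - v \<bullet> \<rho>", OF that]) (erule max_unique[OF sc _ that])
  have "isCont ?fp \<rho>0" if \<rho>0: "\<rho>0 \<in> ?D" for \<rho>0
  proof -
    obtain \<delta> M where \<delta>: "\<delta> > 0"
      and kb: "\<And>v \<rho>. E v - v \<bullet> \<rho> \<le> M + norm v * norm (\<rho> - \<rho>0) - \<delta> * norm v"
      by (rule coercive_bound[OF \<rho>0]) (rule that)
    define r where "r = \<delta> / 2"
    define R where "R = 2 * (M - E 0) / \<delta>"
    have r: "r > 0" using \<delta> by (simp add: r_def)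
    have E0M: "E 0 \<le> M" using kb[of 0 \<rho>0] by simp
    have R0: "R \<ge> 0" using E0M \<delta> by (simp add: R_def)
    have coer: "E w - w \<bullet> \<rho> < E 0" if "\<rho> \<in> ball \<rho>0 r" "norm w > R" for \<rho> w
    proof -
      have "norm (\<rho> - \<rho>0) < r" using that(1) by (simp add: dist_norm norm_minus_commute)
      then have "norm w * norm (\<rho> - \<rho>0) \<le> norm w * r" by (simp add: mult_left_mono)
      moreover have "r * R = M - E 0" using \<delta> by (simp add: r_def R_def)
      moreover have "r * R < r * norm w" using that(2) r by simp
      moreover have "\<delta> * norm w = 2 * (r * norm w)" by (simp add: r_def)
      moreover have "norm w * r = r * norm w" by (simp add: mult.commute)
      ultimately show ?thesis using kb[of w \<rho>] by linarith
    qed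
    have gcont: "continuous_on S (\<lambda>v. E v - v \<bullet> \<rho>)" for S \<rho>
      by (intro continuous_intros continuous_on_subset[OF cE]) auto
    have fpmax: "?fp \<rho> \<in> cball 0 R \<and> (\<forall>w. E w - w \<bullet> \<rho> \<le> E (?fp \<rho>) - ?fp \<rho> \<bullet> \<rho>)"
      if "\<rho> \<in> ball \<rho>0 r" for \<rho>
    proof -
      obtain v where v: "v \<in> cball 0 R" "\<forall>y\<in>cball 0 R. E y - y \<bullet> \<rho> \<le> E v - v \<bullet> \<rho>"
        using continuous_attains_sup[OF compact_cball _ gcont, of 0 R \<rho>] R0 by auto
      have all: "\<forall>w. E w - w \<bullet> \<rho> \<le> E v - v \<bullet> \<rho>"
      proof
        fix w
        show "E w - w \<bullet> \<rho> \<le> E v - v \<bullet> \<rho>"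
        proof (cases "norm w \<le> R")
          case True then show ?thesis using v by auto
        next
          case False
          then have "E w - w \<bullet> \<rho> < E 0" using coer that by auto
          moreover have "E 0 - 0 \<bullet> \<rho> \<le> E v - v \<bullet> \<rho>" using bspec[OF v(2), of 0] R0 by simp
          ultimately show ?thesis by simp
        qed
      qed
      show ?thesis using fpeq[OF all] v all by simp
    qed
    have cont: "continuous_on (ball \<rho>0 r) ?fp"
    proof -
      define G where "G = {z :: (real^'m) \<times> (real^'m). \<forall>w. E w - w \<bullet> fst z \<le> E (snd z) - snd z \<bullet> fst z}"
      have cEs: "continuous_on UNIV (\<lambda>z :: (real^'m) \<times> (real^'m). E (snd z))"
        by (rule continuous_on_compose2[OF cE continuous_on_snd]) auto
      have cG: "closed G" unfolding G_def Collect_all_eq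
        by (intro closed_INT ballI closed_Collect_le continuous_intros cEs)
      have fim: "?fp \<in> ball \<rho>0 r \<rightarrow> cball 0 R" using fpmax by blast
      have graph: "(\<lambda>x. (x, ?fp x)) ` ball \<rho>0 r = (ball \<rho>0 r \<times> cball 0 R) \<inter> G"
      proof
        show "(\<lambda>x. (x, ?fp x)) ` ball \<rho>0 r \<subseteq> (ball \<rho>0 r \<times> cball 0 R) \<inter> G"
          using fpmax unfolding G_def by auto
        show "(ball \<rho>0 r \<times> cball 0 R) \<inter> G \<subseteq> (\<lambda>x. (x, ?fp x)) ` ball \<rho>0 r"
        proof clarify
          fix \<rho> v assume "(\<rho>, v) \<in> G" "\<rho> \<in> ball \<rho>0 r"
          then have "?fp \<rho> = v" using fpeq unfolding G_def by auto
          then show "(\<rho>, v) \<in> (\<lambda>x. (x, ?fp x)) ` ball \<rho>0 r" using \<open>\<rho> \<in> ball \<rho>0 r\<close> by force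
        qed
      qed
      have "closedin (top_of_set (ball \<rho>0 r \<times> cball 0 R)) ((\<lambda>x. (x, ?fp x)) ` ball \<rho>0 r)"
        unfolding graph by (rule closedin_closed_Int[OF cG])
      then show ?thesis using continuous_closed_graph_eq[OF compact_cball fim] by simp
    qed
    show ?thesis by (rule continuous_on_interior[OF cont]) (simp add: r)
  qed
  then show ?thesis by (intro continuous_at_imp_continuous_on) auto
qed

theorem mainTheorem2:
  fixes H0 :: "complex^'d^'d" and H1 :: "'m::finite \<Rightarrow> complex^'d^'d"
  assumes "hermitian H0"
    and "\<And>k. hermitian (H1 k)"
    and "strictly_concave_on UNIV (E0 H0 H1)"
    and "\<And>v. nondegenerate_eigenvalue (Ham H0 H1 v) (complex_of_real (E0 H0 H1 v))"
  shows "continuous_on (Fdom H0 H1) (P0 H0 H1)"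
proof -
  have cE: "continuous_on UNIV (E0 H0 H1)" by (rule sc_cont[OF assms(3)])
  have cP: "continuous_on UNIV (\<lambda>v. orth_projector (eigenspace (Ham H0 H1 v) (complex_of_real (E0 H0 H1 v))))"
    by (rule Pv_cont[OF Ham_cont cE assms(4)])
  have cf: "continuous_on (Fdom H0 H1) (fpot H0 H1)"
    unfolding Fdom_def Ffun_def fpot_def by (rule fpot_cont[OF assms(3)])
  have eq: "P0 H0 H1 = (\<lambda>v. orth_projector (eigenspace (Ham H0 H1 v) (complex_of_real (E0 H0 H1 v)))) \<circ> fpot H0 H1"
    by (rule ext) (simp add: P0_def)
  show ?thesis unfolding eq
    by (rule continuous_on_compose[OF cf continuous_on_subset[OF cP]]) simp
qed

end
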